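(* The intersection graph $G$ of $n$ objects in the plane, each of which is either a horizontal line segment or a vertical line, admits a $3$-hop spanner $\widehat{G}$ with $O(n)$ edges.
   Context: The intersection graph has the objects as vertices, with an edge iff the two objects intersect. For a graph $G$ and integer $t\ge1$, a $t$-hop spanner is a subgraph $\widehat{G}$ of $G$ on the same vertex set such that for every edge $uv\in E(G)$ there is a $u$–$v$ path in $\widehat{G}$ with at most $t$ edges. *)

theory Defs
  imports Main "HOL-Library.Library"
begin

definition hseg :: "real \<Rightarrow> real \<Rightarrow> real \<Rightarrow> (real \<times> real) set" where
  "hseg a b c = {p. a \<le> fst p \<and> fst p \<le> b \<and> snd p = c}"

definition vline :: "real \<Rightarrow> (real \<times> real) set" where
  "vline c = {p. fst p = c}"

definition hseg_or_vline :: "(real \<times> real) set \<Rightarrow> bool" where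
  "hseg_or_vline S \<longleftrightarrow> (\<exists>a b c. a \<le> b \<and> S = hseg a b c) \<or> (\<exists>c. S = vline c)"

definition intersection_graph :: "'v set \<Rightarrow> ('v \<Rightarrow> 'p set) \<Rightarrow> 'v set set" where
  "intersection_graph V obj =
     {{u, v} | u v. u \<in> V \<and> v \<in> V \<and> u \<noteq> v \<and> obj u \<inter> obj v \<noteq> {}}"

definition hop_connected :: "'v set set \<Rightarrow> nat \<Rightarrow> 'v \<Rightarrow> 'v \<Rightarrow> bool" where
  "hop_connected H t u v \<longleftrightarrow>
     (\<exists>xs. xs \<noteq> [] \<and> hd xs = u \<and> last xs = v \<and> length xs \<le> t + 1 \<and>
           (\<forall>i. i + 1 < length xs \<longrightarrow> {xs ! i, xs ! (i + 1)} \<in> H))"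

definition is_hop_spanner :: "'v set set \<Rightarrow> 'v set set \<Rightarrow> nat \<Rightarrow> bool" where
  "is_hop_spanner E H t \<longleftrightarrow> H \<subseteq> E \<and> (\<forall>u v. {u, v} \<in> E \<longrightarrow> hop_connected H t u v)"

end

theory Submission
  imports Defs
begin

lemma hop0: "hop_connected H 3 u u"
  unfolding hop_connected_def by (rule exI[of _ "[u]"]) simp

lemma hopA: "{u,v} \<in> H \<Longrightarrow> hop_connected H 3 u v"
  unfolding hop_connected_def
  by (rule exI[of _ "[u,v]"]) (auto simp: less_Suc_eq)

lemma hopB: "{u,x} \<in> H \<Longrightarrow> {x,v} \<in> H \<Longrightarrow> hop_connected H 3 u v"
  unfolding hop_connected_def
  by (rule exI[of _ "[u,x,v]"]) (auto simp: less_Suc_eq)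

lemma hopC: "{u,x} \<in> H \<Longrightarrow> {x,y} \<in> H \<Longrightarrow> {y,v} \<in> H \<Longrightarrow> hop_connected H 3 u v"
  unfolding hop_connected_def
  by (rule exI[of _ "[u,x,y,v]"]) (auto simp: less_Suc_eq)

lemma hop3:
  assumes "u = x \<or> {u,x} \<in> H" "x = y \<or> {x,y} \<in> H" "y = v \<or> {y,v} \<in> H"
  shows "hop_connected H 3 u v"
  using assms by (elim disjE) (simp_all add: hop0 hopA hopB hopC)

lemma sym_mem: "{x,y} \<in> H \<Longrightarrow> {y,x} \<in> H"
  by (simp add: insert_commute)

lemma G1: "hseg a b c \<inter> vline d \<noteq> {} \<longleftrightarrow> a \<le> d \<and> d \<le> b"
proof
  assume "hseg a b c \<inter> vline d \<noteq> {}"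
  then obtain p where "p \<in> hseg a b c" "p \<in> vline d" by blast
  then show "a \<le> d \<and> d \<le> b" unfolding hseg_def vline_def by auto
next
  assume "a \<le> d \<and> d \<le> b"
  then have "(d,c) \<in> hseg a b c \<inter> vline d" unfolding hseg_def vline_def by auto
  then show "hseg a b c \<inter> vline d \<noteq> {}" by blast
qed

lemma G2: "hseg a b c \<inter> hseg a' b' c' \<noteq> {} \<longleftrightarrow> c = c' \<and> {a..b} \<inter> {a'..b'} \<noteq> {}"
proof
  assume "hseg a b c \<inter> hseg a' b' c' \<noteq> {}"
  then obtain p where "p \<in> hseg a b c" "p \<in> hseg a' b' c'" by blast
  then have "c = c'" "fst p \<in> {a..b} \<inter> {a'..b'}" unfolding hseg_def by auto
  then show "c = c' \<and> {a..b} \<inter> {a'..b'} \<noteq> {}" by blast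
next
  assume "c = c' \<and> {a..b} \<inter> {a'..b'} \<noteq> {}"
  then obtain x where "c = c'" "x \<in> {a..b} \<inter> {a'..b'}" by blast
  then have "(x,c) \<in> hseg a b c \<inter> hseg a' b' c'" unfolding hseg_def by auto
  then show "hseg a b c \<inter> hseg a' b' c' \<noteq> {}" by blast
qed

lemma G3: "vline d \<inter> vline d' \<noteq> {} \<longleftrightarrow> d = d'"
  unfolding vline_def by force

lemma G4: "hseg a b c \<noteq> vline d"
proof
  assume "hseg a b c = vline d"
  then have "(d, c+1) \<in> hseg a b c" unfolding vline_def by auto
  then show False unfolding hseg_def by auto
qed


definition covers :: "'i set \<Rightarrow> ('i \<Rightarrow> real) \<Rightarrow> ('i \<Rightarrow> real) \<Rightarrow> 'i set \<Rightarrow> bool" where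
  "covers I lo hi S \<longleftrightarrow> S \<subseteq> I \<and> (\<forall>h\<in>I. \<forall>x\<in>{lo h..hi h}. \<exists>C\<in>S. x \<in> {lo C..hi C})"

lemma chain_cover:
  fixes I :: "'i set" and lo hi :: "'i \<Rightarrow> real"
  assumes fin: "finite I"
  shows "\<exists>S. covers I lo hi S \<and>
     (\<forall>h\<in>I. card {C\<in>S. {lo C..hi C} \<inter> {lo h..hi h} \<noteq> {}} \<le> 3)"
proof -
  define P where "P n \<longleftrightarrow> (\<exists>S. covers I lo hi S \<and> card S = n)" for n
  have "P (card I)" unfolding P_def covers_def by blast
  then have "P (LEAST n. P n)" by (rule LeastI)
  then obtain S where S: "covers I lo hi S" and cS: "card S = (LEAST n. P n)"
    unfolding P_def by blast
  have minS: "card S \<le> card S'" if "covers I lo hi S'" for S'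
    using that unfolding cS P_def by (intro Least_le) blast
  have SI: "S \<subseteq> I" using S unfolding covers_def by blast
  have finS: "finite S" using SI fin finite_subset by blast
  have "card {C\<in>S. {lo C..hi C} \<inter> {lo h..hi h} \<noteq> {}} \<le> 3" if hI: "h \<in> I" for h
  proof (rule ccontr)
    define M where "M = {C\<in>S. {lo C..hi C} \<inter> {lo h..hi h} \<noteq> {}}"
    assume "\<not> card {C\<in>S. {lo C..hi C} \<inter> {lo h..hi h} \<noteq> {}} \<le> 3"
    then have cM: "card M \<ge> 4" unfolding M_def by simp
    have MS: "M \<subseteq> S" unfolding M_def by blast
    have finM: "finite M" using finS MS finite_subset by blast
    have Mne: "M \<noteq> {}" using cM by auto
    have "Min (lo ` M) \<in> lo ` M" using finM Mne by (intro Min_in) auto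
    then obtain cl where cl: "cl \<in> M" "lo cl = Min (lo ` M)" by (metis imageE)
    have "Max (hi ` M) \<in> hi ` M" using finM Mne by (intro Max_in) auto
    then obtain cr where cr: "cr \<in> M" "hi cr = Max (hi ` M)" by (metis imageE)
    have cll: "lo cl \<le> lo C" if "C \<in> M" for C using cl that finM by simp
    have crh: "hi C \<le> hi cr" if "C \<in> M" for C using cr that finM by simp
    have meet: "lo h \<le> hi C \<and> lo C \<le> hi h" if "C \<in> M" for C
      using that unfolding M_def by auto
    define S' where "S' = (S - M) \<union> {cl, h, cr}"
    have cov': "covers I lo hi S'"
      unfolding covers_def
    proof (intro conjI ballI)
      show "S' \<subseteq> I" unfolding S'_def using SI hI cl cr MS by blast
    next
      fix g x assume g: "g \<in> I" and x: "x \<in> {lo g..hi g}"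
      then obtain C where C: "C \<in> S" "x \<in> {lo C..hi C}"
        using S unfolding covers_def by blast
      show "\<exists>C\<in>S'. x \<in> {lo C..hi C}"
      proof (cases "C \<in> M")
        case False then show ?thesis using C unfolding S'_def by blast
      next
        case True
        have "x \<in> {lo cl..hi cl} \<or> x \<in> {lo h..hi h} \<or> x \<in> {lo cr..hi cr}"
          using cll[OF True] crh[OF True] meet[OF cl(1)] meet[OF cr(1)] C(2) by auto
        then show ?thesis unfolding S'_def by blast
      qed
    qed
    have "card S' \<le> card (S - M) + card {cl, h, cr}"
      unfolding S'_def by (rule card_Un_le)
    also have "card {cl, h, cr} \<le> 3" by (simp add: card_insert_le_m1)
    also have "card (S - M) = card S - card M" using finM MS by (rule card_Diff_subset)
    finally have "card S' \<le> card S - card M + 3" by simp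
    moreover have "card M \<le> card S" using finS MS by (rule card_mono)
    ultimately have "card S' < card S" using cM by linarith
    with minS[OF cov'] show False by simp
  qed
  then show ?thesis using S by blast
qed


lemma main:
  fixes V :: "nat set" and obj :: "nat \<Rightarrow> (real \<times> real) set"
  assumes finV: "finite V" and hv: "\<forall>v\<in>V. hseg_or_vline (obj v)"
  shows "\<exists>H. is_hop_spanner (intersection_graph V obj) H 3 \<and> card H \<le> 6 * card V"
proof -
  define E where "E = intersection_graph V obj"
  define Vl where "Vl = {v\<in>V. \<exists>d. obj v = vline d}"
  define Vh where "Vh = V - Vl"
  have "\<forall>v\<in>Vl. \<exists>d. obj v = vline d" unfolding Vl_def by blast
  then obtain d where d: "\<forall>v\<in>Vl. obj v = vline (d v)" by (metis bchoice)
  have "\<forall>v\<in>Vh. \<exists>t. obj v = hseg (fst t) (fst (snd t)) (snd (snd t))"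
    using hv unfolding Vh_def Vl_def hseg_or_vline_def by fastforce
  then obtain t where t: "\<forall>v\<in>Vh. obj v = hseg (fst (t v)) (fst (snd (t v))) (snd (snd (t v)))"
    by (metis bchoice)
  define a where "a v = fst (t v)" for v
  define b where "b v = fst (snd (t v))" for v
  define c where "c v = snd (snd (t v))" for v
  have abc: "obj v = hseg (a v) (b v) (c v)" if "v \<in> Vh" for v
    using t that unfolding a_def b_def c_def by blast
  have dd: "obj v = vline (d v)" if "v \<in> Vl" for v using d that by blast
  have VlV: "Vl \<subseteq> V" and VhV: "Vh \<subseteq> V" unfolding Vl_def Vh_def by auto
  have disj: "Vl \<inter> Vh = {}" and VU: "Vl \<union> Vh = V" unfolding Vl_def Vh_def by auto
  have finVl: "finite Vl" and finVh: "finite Vh" using VlV VhV finV finite_subset by auto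
  have neq: "u \<noteq> v" if "u \<in> Vh" "v \<in> Vl" for u v using that disj by blast
  have inE: "{u,v} \<in> E" if "u\<in>V" "v\<in>V" "u\<noteq>v" "obj u \<inter> obj v \<noteq> {}" for u v
    using that unfolding E_def intersection_graph_def by blast
  have LL: "obj u \<inter> obj v \<noteq> {} \<longleftrightarrow> d u = d v" if "u \<in> Vl" "v \<in> Vl" for u v
    using that dd G3 by simp
  have HL: "obj u \<inter> obj v \<noteq> {} \<longleftrightarrow> d v \<in> {a u..b u}" if "u \<in> Vh" "v \<in> Vl" for u v
    using that dd abc G1 by simp
  have LH: "obj v \<inter> obj u \<noteq> {} \<longleftrightarrow> d v \<in> {a u..b u}" if "u \<in> Vh" "v \<in> Vl" for u v
    using HL[OF that] by (simp add: Int_commute)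
  have HH: "obj u \<inter> obj v \<noteq> {} \<longleftrightarrow> c u = c v \<and> {a u..b u} \<inter> {a v..b v} \<noteq> {}"
    if "u \<in> Vh" "v \<in> Vh" for u v
    using that abc G2 by simp

  define rep where "rep r = (SOME u. u \<in> Vl \<and> d u = r)" for r
  have rep: "rep (d v) \<in> Vl \<and> d (rep (d v)) = d v" if "v \<in> Vl" for v
  proof -
    have "\<exists>u. u \<in> Vl \<and> d u = d v" using that by blast
    then show ?thesis unfolding rep_def by (rule someI_ex)
  qed
  define E1 where "E1 = (\<lambda>v. {v, rep (d v)}) ` {v\<in>Vl. v \<noteq> rep (d v)}"

  define I where "I y = {h\<in>Vh. c h = y}" for y
  have exS: "\<forall>y. \<exists>S. covers (I y) a b S \<and>
     (\<forall>h\<in>I y. card {C\<in>S. {a C..b C} \<inter> {a h..b h} \<noteq> {}} \<le> 3)"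
  proof
    fix y
    have "finite (I y)" using finVh unfolding I_def by simp
    then show "\<exists>S. covers (I y) a b S \<and>
     (\<forall>h\<in>I y. card {C\<in>S. {a C..b C} \<inter> {a h..b h} \<noteq> {}} \<le> 3)" by (rule chain_cover)
  qed
  obtain S where S': "\<forall>y. covers (I y) a b (S y) \<and>
     (\<forall>h\<in>I y. card {C\<in>S y. {a C..b C} \<inter> {a h..b h} \<noteq> {}} \<le> 3)"
    using choice[OF exS] by blast
  have S: "\<And>y. covers (I y) a b (S y)"
     "\<And>y h. h \<in> I y \<Longrightarrow> card {C\<in>S y. {a C..b C} \<inter> {a h..b h} \<noteq> {}} \<le> 3"
    using S' by blast+
  define E2 where "E2 = (\<Union>h\<in>Vh. (\<lambda>C. {h,C}) ` {C\<in>S (c h). C \<noteq> h \<and> {a C..b C} \<inter> {a h..b h} \<noteq> {}})"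

  obtain S0 where S0: "covers Vh a b S0"
     "\<And>h. h \<in> Vh \<Longrightarrow> card {C\<in>S0. {a C..b C} \<inter> {a h..b h} \<noteq> {}} \<le> 3"
    using chain_cover[OF finVh] by blast
  define U where "U = (\<Union>h\<in>Vh. {a h..b h})"
  define Cv where "Cv v = (SOME C. C \<in> S0 \<and> d v \<in> {a C..b C})" for v
  have Cv: "Cv v \<in> S0 \<and> d v \<in> {a (Cv v)..b (Cv v)}" if "d v \<in> U" for v
  proof -
    have "\<exists>C. C \<in> S0 \<and> d v \<in> {a C..b C}" using that S0(1) unfolding U_def covers_def by blast
    then show ?thesis unfolding Cv_def by (rule someI_ex)
  qed
  define Q where "Q h C = {q. q \<in> Vl \<and> d q \<in> U \<and> Cv q = C \<and> d q \<in> {a h..b h}}" for h C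
  define qq where "qq h C = (SOME q. q \<in> Q h C)" for h C
  have qq: "qq h C \<in> Q h C" if "Q h C \<noteq> {}" for h C
    unfolding qq_def using that by (simp add: some_in_eq)
  define E3 where "E3 = (\<lambda>v. {v, Cv v}) ` {v\<in>Vl. d v \<in> U}"
  define E4 where "E4 = (\<Union>h\<in>Vh. (\<lambda>C. {h, qq h C}) ` {C\<in>S0. {a C..b C} \<inter> {a h..b h} \<noteq> {} \<and> Q h C \<noteq> {}})"
  define H where "H = E1 \<union> E2 \<union> E3 \<union> E4"

  have S0V: "S0 \<subseteq> Vh" using S0(1) unfolding covers_def by blast
  have SV: "S y \<subseteq> I y" for y using S(1)[of y] unfolding covers_def by blast

  have c1: "card E1 \<le> card Vl"
  proof -
    have "card E1 \<le> card {v\<in>Vl. v \<noteq> rep (d v)}" unfolding E1_def using finVl by (intro card_image_le) simp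
    also have "\<dots> \<le> card Vl" using finVl by (intro card_mono) auto
    finally show ?thesis .
  qed
  have c3: "card E3 \<le> card Vl"
  proof -
    have "card E3 \<le> card {v\<in>Vl. d v \<in> U}" unfolding E3_def using finVl by (intro card_image_le) simp
    also have "\<dots> \<le> card Vl" using finVl by (intro card_mono) auto
    finally show ?thesis .
  qed
  have c2: "card E2 \<le> 3 * card Vh"
  proof -
    have "card E2 \<le> (\<Sum>h\<in>Vh. card ((\<lambda>C. {h,C}) ` {C\<in>S (c h). C \<noteq> h \<and> {a C..b C} \<inter> {a h..b h} \<noteq> {}}))"
      unfolding E2_def using finVh by (rule card_UN_le)
    also have "\<dots> \<le> (\<Sum>h\<in>Vh. 3)"
    proof (rule sum_mono)
      fix h assume h: "h \<in> Vh"
      have fin: "finite {C\<in>S (c h). {a C..b C} \<inter> {a h..b h} \<noteq> {}}"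
        by (rule finite_subset[OF _ finVh]) (use SV[of "c h"] in \<open>auto simp: I_def\<close>)
      have "card ((\<lambda>C. {h,C}) ` {C\<in>S (c h). C \<noteq> h \<and> {a C..b C} \<inter> {a h..b h} \<noteq> {}})
          \<le> card {C\<in>S (c h). C \<noteq> h \<and> {a C..b C} \<inter> {a h..b h} \<noteq> {}}"
        using fin by (intro card_image_le) (auto elim: finite_subset[rotated])
      also have "\<dots> \<le> card {C\<in>S (c h). {a C..b C} \<inter> {a h..b h} \<noteq> {}}"
        using fin by (intro card_mono) auto
      also have "\<dots> \<le> 3" using S(2)[of h "c h"] h unfolding I_def by simp
      finally show "card ((\<lambda>C. {h,C}) ` {C\<in>S (c h). C \<noteq> h \<and> {a C..b C} \<inter> {a h..b h} \<noteq> {}}) \<le> 3" .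
    qed
    finally show ?thesis by simp
  qed
  have c4: "card E4 \<le> 3 * card Vh"
  proof -
    have "card E4 \<le> (\<Sum>h\<in>Vh. card ((\<lambda>C. {h, qq h C}) ` {C\<in>S0. {a C..b C} \<inter> {a h..b h} \<noteq> {} \<and> Q h C \<noteq> {}}))"
      unfolding E4_def using finVh by (rule card_UN_le)
    also have "\<dots> \<le> (\<Sum>h\<in>Vh. 3)"
    proof (rule sum_mono)
      fix h assume h: "h \<in> Vh"
      have fin: "finite {C\<in>S0. {a C..b C} \<inter> {a h..b h} \<noteq> {}}"
        by (rule finite_subset[OF _ finVh]) (use S0V in auto)
      have "card ((\<lambda>C. {h, qq h C}) ` {C\<in>S0. {a C..b C} \<inter> {a h..b h} \<noteq> {} \<and> Q h C \<noteq> {}})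
          \<le> card {C\<in>S0. {a C..b C} \<inter> {a h..b h} \<noteq> {} \<and> Q h C \<noteq> {}}"
        using fin by (intro card_image_le) (auto elim: finite_subset[rotated])
      also have "\<dots> \<le> card {C\<in>S0. {a C..b C} \<inter> {a h..b h} \<noteq> {}}"
        using fin by (intro card_mono) auto
      also have "\<dots> \<le> 3" using S0(2) h by simp
      finally show "card ((\<lambda>C. {h, qq h C}) ` {C\<in>S0. {a C..b C} \<inter> {a h..b h} \<noteq> {} \<and> Q h C \<noteq> {}}) \<le> 3" .
    qed
    finally show ?thesis by simp
  qed
  have cV: "card V = card Vl + card Vh"
    using card_Un_disjoint[OF finVl finVh disj] VU by simp
  have cH: "card H \<le> 6 * card V"
  proof -
    have "card H \<le> card (E1 \<union> E2 \<union> E3) + card E4" unfolding H_def by (rule card_Un_le)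
    moreover have "card (E1 \<union> E2 \<union> E3) \<le> card (E1 \<union> E2) + card E3" by (rule card_Un_le)
    moreover have "card (E1 \<union> E2) \<le> card E1 + card E2" by (rule card_Un_le)
    ultimately have "card H \<le> card E1 + card E2 + card E3 + card E4" by linarith
    then show ?thesis using c1 c2 c3 c4 cV by linarith
  qed

  have HE: "H \<subseteq> E"
  proof -
    have "E1 \<subseteq> E"
    proof
      fix e assume "e \<in> E1"
      then obtain v where v: "v \<in> Vl" "v \<noteq> rep (d v)" "e = {v, rep (d v)}" unfolding E1_def by blast
      show "e \<in> E" using v rep[OF v(1)] LL[of v "rep (d v)"] VlV by (auto intro!: inE)
    qed
    moreover have "E2 \<subseteq> E"
    proof
      fix e assume "e \<in> E2"
      then obtain h C where hC: "h \<in> Vh" "C \<in> S (c h)" "C \<noteq> h" "{a C..b C} \<inter> {a h..b h} \<noteq> {}" "e = {h, C}"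
        unfolding E2_def by blast
      have "C \<in> Vh" "c C = c h" using SV[of "c h"] hC(2) unfolding I_def by auto
      then show "e \<in> E" using hC HH[of h C] VhV by (auto simp: Int_commute intro!: inE)
    qed
    moreover have "E3 \<subseteq> E"
    proof
      fix e assume "e \<in> E3"
      then obtain v where v: "v \<in> Vl" "d v \<in> U" "e = {v, Cv v}" unfolding E3_def by blast
      have "Cv v \<in> Vh" using Cv[OF v(2)] S0V by blast
      then show "e \<in> E" using v Cv[OF v(2)] LH[of "Cv v" v] VlV VhV neq[of "Cv v" v] by (auto intro!: inE)
    qed
    moreover have "E4 \<subseteq> E"
    proof
      fix e assume "e \<in> E4"
      then obtain h C where hC: "h \<in> Vh" "Q h C \<noteq> {}" "e = {h, qq h C}"
        unfolding E4_def by blast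
      have "qq h C \<in> Vl" "d (qq h C) \<in> {a h..b h}" using qq[OF hC(2)] unfolding Q_def by auto
      then show "e \<in> E" using hC HL[of h "qq h C"] VlV VhV neq[of h "qq h C"] by (auto intro!: inE)
    qed
    ultimately show ?thesis unfolding H_def by blast
  qed

  have conn: "hop_connected H 3 u v" if uv: "{u,v} \<in> E" for u v
  proof -
    obtain u' v' where uv': "{u,v} = {u',v'}" "u'\<in>V" "v'\<in>V" "u'\<noteq>v'" "obj u' \<inter> obj v' \<noteq> {}"
      using uv unfolding E_def intersection_graph_def by blast
    have int': "obj v' \<inter> obj u' \<noteq> {}" using uv'(5) by (simp add: Int_commute)
    have "(u = u' \<and> v = v') \<or> (u = v' \<and> v = u')" using uv'(1) by (simp add: doubleton_eq_iff)
    then have uvV: "u \<in> V" "v \<in> V" and int: "obj u \<inter> obj v \<noteq> {}"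
      using uv' int' by blast+
    have hl: "hop_connected H 3 h w \<and> hop_connected H 3 w h"
      if h: "h \<in> Vh" and w: "w \<in> Vl" and hw: "d w \<in> {a h..b h}" for h w
    proof -
      have wU: "d w \<in> U" using h hw unfolding U_def by blast
      define C where "C = Cv w"
      have C: "C \<in> S0" "d w \<in> {a C..b C}" using Cv[OF wU] unfolding C_def by auto
      have meets: "{a C..b C} \<inter> {a h..b h} \<noteq> {}" using C(2) hw by blast
      have "w \<in> Q h C" using w wU hw unfolding Q_def C_def by blast
      then have Qne: "Q h C \<noteq> {}" by blast
      define q where "q = qq h C"
      have q: "q \<in> Vl" "d q \<in> U" "Cv q = C" using qq[OF Qne] unfolding Q_def q_def by auto
      have "C \<in> {C\<in>S0. {a C..b C} \<inter> {a h..b h} \<noteq> {} \<and> Q h C \<noteq> {}}"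
        using C(1) meets Qne by blast
      then have "{h, qq h C} \<in> (\<lambda>C. {h, qq h C}) ` {C\<in>S0. {a C..b C} \<inter> {a h..b h} \<noteq> {} \<and> Q h C \<noteq> {}}"
        by (rule imageI)
      then have "{h, q} \<in> E4" unfolding E4_def q_def using h by (rule UN_I[rotated])
      then have e1: "{h, q} \<in> H" unfolding H_def by (rule UnI2)
      have "q \<in> {v\<in>Vl. d v \<in> U}" using q by blast
      then have "{q, Cv q} \<in> E3" unfolding E3_def by (rule imageI)
      then have e2: "{q, C} \<in> H" unfolding H_def using q(3) by blast
      have "w \<in> {v\<in>Vl. d v \<in> U}" using w wU by blast
      then have "{w, Cv w} \<in> E3" unfolding E3_def by (rule imageI)
      then have e3': "{w, C} \<in> H" unfolding H_def C_def by blast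
      have e3: "{C, w} \<in> H" using e3' by (rule sym_mem)
      show ?thesis
        using hop3[OF disjI2[OF e1] disjI2[OF e2] disjI2[OF e3]]
              hop3[OF disjI2[OF e3'] disjI2[OF sym_mem[OF e2]] disjI2[OF sym_mem[OF e1]]] by blast
    qed
    show ?thesis
    proof (cases "u \<in> Vl")
      case uL: True
      show ?thesis
      proof (cases "v \<in> Vl")
        case vL: True
        have "d u = d v" using LL[OF uL vL, THEN iffD1, OF int] .
        define w where "w = rep (d u)"
        have "u = w \<or> {u, w} \<in> H"
        proof (cases "u = w")
          case False
          then have "u \<in> {v\<in>Vl. v \<noteq> rep (d v)}" using uL unfolding w_def by blast
          then have "{u, rep (d u)} \<in> E1" unfolding E1_def by (rule imageI)
          then show ?thesis unfolding H_def w_def by blast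
        qed simp
        moreover have "w = v \<or> {w, v} \<in> H"
        proof (cases "v = w")
          case False
          then have "v \<in> {v\<in>Vl. v \<noteq> rep (d v)}" using vL \<open>d u = d v\<close> unfolding w_def by simp
          then have "{v, rep (d v)} \<in> E1" unfolding E1_def by (rule imageI)
          then have "{v, rep (d v)} \<in> H" unfolding H_def by blast
          then have "{rep (d v), v} \<in> H" by (rule sym_mem)
          then show ?thesis unfolding w_def using \<open>d u = d v\<close> by simp
        qed simp
        ultimately show ?thesis using hop3[of u w H v v] by (simp only: simp_thms)
      next
        case vH: False
        then have vH: "v \<in> Vh" using uvV VU by blast
        have "d u \<in> {a v..b v}" using LH[OF vH uL, THEN iffD1, OF int] .
        then show ?thesis by (rule hl[OF vH uL, THEN conjunct2])
      qed
    next
      case uH: False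
      then have uH: "u \<in> Vh" using uvV VU by blast
      show ?thesis
      proof (cases "v \<in> Vl")
        case vL: True
        have "d v \<in> {a u..b u}" using HL[OF uH vL, THEN iffD1, OF int] .
        then show ?thesis by (rule hl[OF uH vL, THEN conjunct1])
      next
        case vH: False
        then have vH: "v \<in> Vh" using uvV VU by blast
        have cuv: "c u = c v" and ne: "{a u..b u} \<inter> {a v..b v} \<noteq> {}"
          using HH[OF uH vH] int by simp_all
        from ne obtain x where x0: "x \<in> {a u..b u} \<inter> {a v..b v}" by blast
        have x: "c u = c v" "x \<in> {a u..b u}" "x \<in> {a v..b v}" using cuv x0 by simp_all
        have uI: "u \<in> I (c u)" using uH unfolding I_def by simp
        have "\<exists>C\<in>S (c u). x \<in> {a C..b C}"
          using S(1)[of "c u"] uI x(2) unfolding covers_def by blast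
        then obtain C where C: "C \<in> S (c u)" "x \<in> {a C..b C}" by blast
        have "u = C \<or> {u, C} \<in> H"
        proof (cases "u = C")
          case False
          have "x \<in> {a C..b C} \<inter> {a u..b u}" using C(2) x(2) by simp
          then have "{a C..b C} \<inter> {a u..b u} \<noteq> {}" by blast
          then have "C \<in> {C\<in>S (c u). C \<noteq> u \<and> {a C..b C} \<inter> {a u..b u} \<noteq> {}}"
            using C(1) False by simp
          then have "{u, C} \<in> (\<lambda>C. {u,C}) ` {C\<in>S (c u). C \<noteq> u \<and> {a C..b C} \<inter> {a u..b u} \<noteq> {}}"
            by (rule imageI)
          then have "{u, C} \<in> E2" unfolding E2_def using uH by (rule UN_I[rotated])
          then show ?thesis unfolding H_def by blast
        qed simp
        moreover have "C = v \<or> {C, v} \<in> H"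
        proof (cases "C = v")
          case False
          have "C \<in> S (c v)" using C x by simp
          moreover have "x \<in> {a C..b C} \<inter> {a v..b v}" using C(2) x(3) by simp
          then have "{a C..b C} \<inter> {a v..b v} \<noteq> {}" by blast
          ultimately have "C \<in> {C\<in>S (c v). C \<noteq> v \<and> {a C..b C} \<inter> {a v..b v} \<noteq> {}}"
            using False by simp
          then have "{v, C} \<in> (\<lambda>C. {v,C}) ` {C\<in>S (c v). C \<noteq> v \<and> {a C..b C} \<inter> {a v..b v} \<noteq> {}}"
            by (rule imageI)
          then have "{v, C} \<in> E2" unfolding E2_def using vH by (rule UN_I[rotated])
          then have "{v, C} \<in> H" unfolding H_def by blast
          then have "{C, v} \<in> H" by (rule sym_mem)
          then show ?thesis by (rule disjI2)
        qed simp
        ultimately show ?thesis using hop3[of u C H v v] by (simp only: simp_thms)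
      qed
    qed
  qed
  have "is_hop_spanner E H 3" unfolding is_hop_spanner_def using HE conn by blast
  then show ?thesis using cH unfolding E_def by blast
qed

theorem lemma18:
  shows "\<exists>C::real. \<forall>(V::nat set) (obj :: nat \<Rightarrow> (real \<times> real) set).
           finite V \<and> (\<forall>v\<in>V. hseg_or_vline (obj v)) \<longrightarrow>
           (\<exists>H. is_hop_spanner (intersection_graph V obj) H 3 \<and>
                real (card H) \<le> C * real (card V))"
proof (intro exI[of _ 6] allI impI)
  fix V :: "nat set" and obj :: "nat \<Rightarrow> (real \<times> real) set"
  assume "finite V \<and> (\<forall>v\<in>V. hseg_or_vline (obj v))"
  then obtain H where "is_hop_spanner (intersection_graph V obj) H 3" "card H \<le> 6 * card V"
    using main by blast
  then show "\<exists>H. is_hop_spanner (intersection_graph V obj) H 3 \<and> real (card H) \<le> 6 * real (card V)"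
    by (intro exI[of _ H]) (simp add: of_nat_le_iff[symmetric])
qed

end
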